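(* For $x\in\mathbb{R}^d\setminus\{0\}$ (for every $d$), $0\le a<b\le1$ and $r>0$, $$\lim_{d\to+\infty}\frac1d\ln\left(\frac{|B(x,r,a,b)|}{v_d}\right)=\ln\big(r\sqrt{1-a^2}\big).$$
   Context: $v_d$ is the volume of the unit Euclidean ball of $\mathbb{R}^d$ and $|\cdot|$ is Lebesgue measure. For $x\in\mathbb{R}^d\setminus\{0\}$, $0\le a<b\le1$ and $r>0$: if $a>0$, $B(x,r,a,b)=\{y\in\mathbb{R}^d:\|y-x\|\le r,\ ar<\langle y-x,x/\|x\|\rangle\le br\}$; if $a=0$, $B(x,r,a,b)=\{y\in\mathbb{R}^d:\|y-x\|\le r,\ \langle y-x,x/\|x\|\rangle\le br\}$. *)

theory Defs
  imports "HOL-Analysis.Analysis"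
begin

text \<open>R^d is modelled as the extensional functions {..<d} -> real, with Lebesgue measure
  given by the product measure of d copies of lborel.\<close>

definition Rsp :: "nat \<Rightarrow> (nat \<Rightarrow> real) measure" where
  "Rsp d = PiM {..<d} (\<lambda>_. lborel)"

definition ipd :: "nat \<Rightarrow> (nat \<Rightarrow> real) \<Rightarrow> (nat \<Rightarrow> real) \<Rightarrow> real" where
  "ipd d x y = (\<Sum>i<d. x i * y i)"

definition nrmd :: "nat \<Rightarrow> (nat \<Rightarrow> real) \<Rightarrow> real" where
  "nrmd d x = sqrt (\<Sum>i<d. (x i)\<^sup>2)"

definition vball :: "nat \<Rightarrow> real" where
  "vball d = measure (Rsp d) {y \<in> space (Rsp d). nrmd d y \<le> 1}"

definition Bset :: "nat \<Rightarrow> (nat \<Rightarrow> real) \<Rightarrow> real \<Rightarrow> real \<Rightarrow> real \<Rightarrow> (nat \<Rightarrow> real) set" where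
  "Bset d x r a b = {y \<in> space (Rsp d).
      nrmd d (\<lambda>i. y i - x i) \<le> r \<and>
      (a > 0 \<longrightarrow> a * r < ipd d (\<lambda>i. y i - x i) x / nrmd d x) \<and>
      ipd d (\<lambda>i. y i - x i) x / nrmd d x \<le> b * r}"

end

theory Submission
  imports Defs
begin

lemma psf: "product_sigma_finite (\<lambda>_::nat. lborel::real measure)"
  by standard

lemma nrmd_meas[measurable]: "(\<lambda>y. nrmd d (\<lambda>i. y i - c i)) \<in> borel_measurable (Rsp d)"
  unfolding nrmd_def Rsp_def by measurable

lemma ipd_meas[measurable]: "(\<lambda>y. ipd d (\<lambda>i. y i - c i) x) \<in> borel_measurable (Rsp d)"
  unfolding ipd_def Rsp_def by measurable

lemma ball_sets: "{y \<in> space (Rsp d). nrmd d (\<lambda>i. y i - c i) \<le> \<rho>} \<in> sets (Rsp d)"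
  by measurable

lemma Bset_sets: "Bset d x r a b \<in> sets (Rsp d)"
  unfolding Bset_def by measurable

lemma transl:
  fixes c :: "nat \<Rightarrow> real"
  shows "distr (Rsp d) (Rsp d) (\<lambda>y. restrict (\<lambda>i. c i + y i) {..<d}) = Rsp d"
proof -
  interpret product_sigma_finite "\<lambda>_::nat. lborel::real measure" by (rule psf)
  have m: "(\<lambda>y. restrict (\<lambda>i. c i + y i) {..<d}) \<in> measurable (Rsp d) (Rsp d)"
    unfolding Rsp_def by measurable
  show ?thesis unfolding Rsp_def
  proof (rule PiM_eqI)
    fix A :: "nat \<Rightarrow> real set" assume A: "\<And>i. i \<in> {..<d} \<Longrightarrow> A i \<in> sets lborel"
    have pre: "(\<lambda>y. restrict (\<lambda>i. c i + y i) {..<d}) -` Pi\<^sub>E {..<d} A \<inter> space (PiM {..<d} (\<lambda>_. lborel))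
       = Pi\<^sub>E {..<d} (\<lambda>i. (+) (c i) -` A i)"
      by (auto simp: space_PiM PiE_def Pi_def extensional_def)
    have e: "emeasure lborel ((+) (c i) -` A i) = emeasure lborel (A i)" if "i < d" for i
    proof -
      have "emeasure lborel (A i) = emeasure (distr lborel borel ((+) (c i))) (A i)"
        by (simp add: lborel_distr_plus)
      also have "\<dots> = emeasure lborel ((+) (c i) -` A i)"
        using A that by (subst emeasure_distr) auto
      finally show ?thesis by simp
    qed
    show "emeasure (distr (PiM {..<d} (\<lambda>_. lborel)) (PiM {..<d} (\<lambda>_. lborel)) (\<lambda>y. restrict (\<lambda>i. c i + y i) {..<d})) (Pi\<^sub>E {..<d} A)
      = (\<Prod>i\<in>{..<d}. emeasure lborel (A i))"
      using m A unfolding Rsp_def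
      apply (subst emeasure_distr)
        apply (auto intro!: sets_PiM_I_finite)[2]
      apply (subst pre)
      apply (subst emeasure_PiM)
        apply (auto intro!: prod.cong e measurable_sets_borel[of _ borel])
      done
  qed auto
qed

lemma ball_emeasure:
  assumes "\<rho> > 0"
  shows "emeasure (Rsp d) {y \<in> space (Rsp d). nrmd d (\<lambda>i. y i - c i) \<le> \<rho>}
     = ennreal (unit_ball_vol (real d) * \<rho> ^ d)"
proof -
  let ?T = "\<lambda>y. restrict (\<lambda>i. c i + y i) {..<d}"
  have m: "?T \<in> measurable (Rsp d) (Rsp d)"
    unfolding Rsp_def by measurable
  have "emeasure (Rsp d) {y \<in> space (Rsp d). nrmd d (\<lambda>i. y i - c i) \<le> \<rho>}
     = emeasure (distr (Rsp d) (Rsp d) ?T) {y \<in> space (Rsp d). nrmd d (\<lambda>i. y i - c i) \<le> \<rho>}"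
    by (simp add: transl)
  also have "\<dots> = emeasure (Rsp d) (?T -` {y \<in> space (Rsp d). nrmd d (\<lambda>i. y i - c i) \<le> \<rho>} \<inter> space (Rsp d))"
    using m by (subst emeasure_distr) (auto simp: ball_sets)
  also have "?T -` {y \<in> space (Rsp d). nrmd d (\<lambda>i. y i - c i) \<le> \<rho>} \<inter> space (Rsp d)
     = {f. sqrt (\<Sum>i\<in>{..<d}. (f i)\<^sup>2) \<le> \<rho>} \<inter> space (Pi\<^sub>M {..<d} (\<lambda>_. lborel))"
    using m by (auto simp: nrmd_def Rsp_def space_PiM measurable_space[OF m, unfolded Rsp_def])
  also have "emeasure (Rsp d) \<dots> = ennreal (unit_ball_vol (real d) * \<rho> ^ d)"
    unfolding Rsp_def using assms by (subst emeasure_cball_aux) auto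
  finally show ?thesis .
qed

lemma sq_expand:
  fixes w u :: "nat \<Rightarrow> real"
  shows "(\<Sum>i<d. (w i + \<alpha> * u i)\<^sup>2) = (\<Sum>i<d. (w i)\<^sup>2) + 2*\<alpha>*(\<Sum>i<d. w i * u i) + \<alpha>\<^sup>2*(\<Sum>i<d. (u i)\<^sup>2)"
proof -
  have "\<And>i. (w i + \<alpha> * u i)\<^sup>2 = (w i)\<^sup>2 + 2*\<alpha>*(w i * u i) + \<alpha>\<^sup>2*(u i)\<^sup>2"
    by (simp add: power2_eq_square algebra_simps)
  then show ?thesis by (simp add: sum.distrib sum_distrib_left)
qed

lemma unit_u:
  assumes "nrmd d X > 0"
  shows "(\<Sum>i<d. (X i / nrmd d X)\<^sup>2) = 1"
proof -
  have "(nrmd d X)\<^sup>2 = (\<Sum>i<d. (X i)\<^sup>2)" unfolding nrmd_def by (simp add: sum_nonneg)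
  moreover have "(nrmd d X)\<^sup>2 > 0" using assms by simp
  ultimately show ?thesis using assms by (simp add: power_divide sum_divide_distrib[symmetric])
qed

lemma ipd_u:
  "ipd d z X / nrmd d X = (\<Sum>i<d. z i * (X i / nrmd d X))"
  unfolding ipd_def by (simp add: sum_divide_distrib)

lemma nrmd_le_iff:
  assumes "\<rho> \<ge> 0" shows "nrmd d w \<le> \<rho> \<longleftrightarrow> (\<Sum>i<d. (w i)\<^sup>2) \<le> \<rho>\<^sup>2"
  unfolding nrmd_def using assms by (simp add: real_sqrt_le_iff' sum_nonneg)

lemma upper_incl:
  assumes N: "nrmd d X > 0" and a: "0 \<le> a" "a \<le> 1" and r: "r > 0"
    and y: "y \<in> Bset d X r a b"
  shows "nrmd d (\<lambda>i. y i - (X i + (a*r) * (X i / nrmd d X))) \<le> r * sqrt (1 - a\<^sup>2)"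
proof -
  define u where "u = (\<lambda>i. X i / nrmd d X)"
  define z where "z = (\<lambda>i. y i - X i)"
  define t where "t = (\<Sum>i<d. z i * u i)"
  have B: "nrmd d z \<le> r" "a > 0 \<longrightarrow> a*r < t" using y unfolding Bset_def z_def t_def u_def ipd_u by auto
  have zz: "(\<Sum>i<d. (z i)\<^sup>2) \<le> r\<^sup>2" using B(1) r nrmd_le_iff[of r d z] by simp
  have at: "a * t \<ge> a * (a * r)"
    using B(2) a by (cases "a > 0") (auto intro: mult_left_mono)
  have uu: "(\<Sum>i<d. (u i)\<^sup>2) = 1" using unit_u[OF N] unfolding u_def .
  have "(\<Sum>i<d. (y i - (X i + (a*r) * u i))\<^sup>2) = (\<Sum>i<d. (z i + (-(a*r)) * u i)\<^sup>2)"
    unfolding z_def by (simp add: algebra_simps)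
  also have "\<dots> = (\<Sum>i<d. (z i)\<^sup>2) - 2*(a*r)*t + (a*r)\<^sup>2"
    unfolding sq_expand uu t_def by simp
  also have "\<dots> \<le> (r * sqrt (1 - a\<^sup>2))\<^sup>2"
  proof -
    have h1: "1 - a\<^sup>2 \<ge> 0" using a by (simp add: abs_square_le_1)
    have h2: "r * (a * t) \<ge> r * (a * (a * r))" using mult_left_mono[OF at, of r] r by simp
    have "(r * sqrt (1 - a\<^sup>2))\<^sup>2 = r\<^sup>2 * (1 - a\<^sup>2)" using h1 by (simp add: power_mult_distrib)
    then show ?thesis using zz h2 by (simp add: power2_eq_square algebra_simps)
  qed
  finally have "(\<Sum>i<d. (y i - (X i + (a*r) * u i))\<^sup>2) \<le> (r * sqrt (1 - a\<^sup>2))\<^sup>2" .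
  then show ?thesis unfolding u_def using nrmd_le_iff[of "r * sqrt (1 - a\<^sup>2)"] r a
    by (simp add: abs_square_le_1)
qed

lemma lin_expand:
  fixes w u :: "nat \<Rightarrow> real"
  shows "(\<Sum>i<d. (w i + \<alpha> * u i) * u i) = (\<Sum>i<d. w i * u i) + \<alpha>*(\<Sum>i<d. (u i)\<^sup>2)"
  by (simp add: algebra_simps sum.distrib sum_distrib_left power2_eq_square)

lemma lower_incl:
  assumes N: "nrmd d X > 0" and dl: "\<delta> > 0" "\<delta> \<le> \<rho>" and sc: "sc \<ge> 0" "a*r \<le> sc - \<delta>" "sc + \<delta> \<le> b*r"
    and rr: "sc\<^sup>2 + 2* sc*\<delta> + \<rho>\<^sup>2 \<le> r\<^sup>2" and r: "r > 0"
    and y: "y \<in> space (Rsp d)" "nrmd d (\<lambda>i. y i - (X i + sc * (X i / nrmd d X))) \<le> \<rho>"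
  shows "y \<in> Bset d X r a b \<or> nrmd d (\<lambda>i. y i - (X i + (sc-\<delta>) * (X i / nrmd d X))) \<le> sqrt (\<rho>\<^sup>2-\<delta>\<^sup>2)
     \<or> nrmd d (\<lambda>i. y i - (X i + (sc+\<delta>) * (X i / nrmd d X))) \<le> sqrt (\<rho>\<^sup>2-\<delta>\<^sup>2)"
proof -
  define u where "u = (\<lambda>i. X i / nrmd d X)"
  define w where "w = (\<lambda>i. y i - (X i + sc * u i))"
  define \<tau> where "\<tau> = (\<Sum>i<d. w i * u i)"
  have uu: "(\<Sum>i<d. (u i)\<^sup>2) = 1" using unit_u[OF N] unfolding u_def .
  have \<rho>0: "\<rho> \<ge> 0" using dl by simp
  have W: "(\<Sum>i<d. (w i)\<^sup>2) \<le> \<rho>\<^sup>2" using y(2) nrmd_le_iff[OF \<rho>0, of d w] unfolding w_def u_def by simp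
  have sq0: "\<rho>\<^sup>2-\<delta>\<^sup>2 \<ge> 0" using dl by (simp add: power_mono)
  have sq: "(sqrt (\<rho>\<^sup>2-\<delta>\<^sup>2))\<^sup>2 = \<rho>\<^sup>2-\<delta>\<^sup>2" using sq0 by simp
  consider "\<tau> \<le> -\<delta>" | "\<tau> > \<delta>" | "-\<delta> < \<tau>" "\<tau> \<le> \<delta>" by linarith
  then show ?thesis
  proof cases
    case 1
    have "(\<Sum>i<d. (y i - (X i + (sc-\<delta>) * u i))\<^sup>2) = (\<Sum>i<d. (w i + \<delta> * u i)\<^sup>2)"
      unfolding w_def by (simp add: algebra_simps)
    also have "\<dots> = (\<Sum>i<d. (w i)\<^sup>2) + 2*\<delta>*\<tau> + \<delta>\<^sup>2" unfolding sq_expand uu \<tau>_def by simp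
    also have "\<dots> \<le> \<rho>\<^sup>2-\<delta>\<^sup>2" using W 1 dl mult_left_mono[OF 1, of \<delta>] by (simp add: power2_eq_square)
    finally have "(\<Sum>i<d. (y i - (X i + (sc-\<delta>) * u i))\<^sup>2) \<le> (sqrt (\<rho>\<^sup>2-\<delta>\<^sup>2))\<^sup>2" using sq by simp
    then have "nrmd d (\<lambda>i. y i - (X i + (sc-\<delta>) * u i)) \<le> sqrt (\<rho>\<^sup>2-\<delta>\<^sup>2)"
      using nrmd_le_iff[OF real_sqrt_ge_zero[OF sq0], of d "\<lambda>i. y i - (X i + (sc-\<delta>) * u i)"] by simp
    then show ?thesis unfolding u_def by simp
  next
    case 2
    have "(\<Sum>i<d. (y i - (X i + (sc+\<delta>) * u i))\<^sup>2) = (\<Sum>i<d. (w i + (-\<delta>) * u i)\<^sup>2)"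
      unfolding w_def by (simp add: algebra_simps)
    also have "\<dots> = (\<Sum>i<d. (w i)\<^sup>2) - 2*\<delta>*\<tau> + \<delta>\<^sup>2" unfolding sq_expand uu \<tau>_def by simp
    also have "\<dots> \<le> \<rho>\<^sup>2-\<delta>\<^sup>2" using W mult_strict_left_mono[OF 2 dl(1)] unfolding power2_eq_square by linarith
    finally have "(\<Sum>i<d. (y i - (X i + (sc+\<delta>) * u i))\<^sup>2) \<le> (sqrt (\<rho>\<^sup>2-\<delta>\<^sup>2))\<^sup>2" using sq by simp
    then have "nrmd d (\<lambda>i. y i - (X i + (sc+\<delta>) * u i)) \<le> sqrt (\<rho>\<^sup>2-\<delta>\<^sup>2)"
      using nrmd_le_iff[OF real_sqrt_ge_zero[OF sq0], of d "\<lambda>i. y i - (X i + (sc+\<delta>) * u i)"] by simp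
    then show ?thesis unfolding u_def by simp
  next
    case 3
    define z where "z = (\<lambda>i. y i - X i)"
    have zw: "z = (\<lambda>i. w i + sc * u i)" unfolding z_def w_def by auto
    have "(\<Sum>i<d. (z i)\<^sup>2) = (\<Sum>i<d. (w i)\<^sup>2) + 2* sc*\<tau> + sc\<^sup>2" unfolding zw sq_expand uu \<tau>_def by simp
    also have "\<dots> \<le> r\<^sup>2" using W rr mult_left_mono[OF 3(2) sc(1)] by simp
    finally have zn: "nrmd d z \<le> r" using nrmd_le_iff[of r d z] r by simp
    have t0: "ipd d z X / nrmd d X = (\<Sum>i<d. z i * u i)" unfolding u_def by (rule ipd_u)
    have "(\<Sum>i<d. z i * u i) = \<tau> + sc" unfolding zw lin_expand uu \<tau>_def by simp
    with t0 have t: "ipd d z X / nrmd d X = \<tau> + sc" by simp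
    show ?thesis using zn t 3 sc y(1) unfolding Bset_def z_def by auto
  qed
qed

lemma ball_fmeas:
  assumes "\<rho> > 0"
  shows "{y \<in> space (Rsp d). nrmd d (\<lambda>i. y i - c i) \<le> \<rho>} \<in> fmeasurable (Rsp d)"
  by (rule fmeasurableI) (auto simp: ball_sets ball_emeasure[OF assms])

lemma ball_measure:
  assumes "\<rho> > 0"
  shows "measure (Rsp d) {y \<in> space (Rsp d). nrmd d (\<lambda>i. y i - c i) \<le> \<rho>} = unit_ball_vol (real d) * \<rho> ^ d"
  unfolding measure_def using assms by (simp add: ball_emeasure)

lemma vball_eq: "vball d = unit_ball_vol (real d)"
  using ball_measure[of 1 d "\<lambda>_. 0"] unfolding vball_def by simp

lemma m_upper:
  assumes N: "nrmd d X > 0" and a: "0 \<le> a" "a < 1" and r: "r > 0"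
  shows "measure (Rsp d) (Bset d X r a b) \<le> unit_ball_vol (real d) * (r * sqrt (1 - a\<^sup>2)) ^ d"
proof -
  have R: "r * sqrt (1 - a\<^sup>2) > 0" using a r by (simp add: abs_square_less_1)
  have "Bset d X r a b \<subseteq> {y \<in> space (Rsp d). nrmd d (\<lambda>i. y i - (X i + (a*r) * (X i / nrmd d X))) \<le> r * sqrt (1 - a\<^sup>2)}"
    using upper_incl[OF N a(1) _ r] a by (auto simp: Bset_def)
  then have "measure (Rsp d) (Bset d X r a b) \<le> measure (Rsp d) {y \<in> space (Rsp d). nrmd d (\<lambda>i. y i - (X i + (a*r) * (X i / nrmd d X))) \<le> r * sqrt (1 - a\<^sup>2)}"
    by (rule measure_mono_fmeasurable) (auto simp: Bset_sets ball_fmeas[OF R])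
  then show ?thesis using ball_measure[OF R] by simp
qed

lemma m_lower:
  assumes N: "nrmd d X > 0" and dl: "\<delta> > 0" "\<delta> < \<rho>" and sc: "sc \<ge> 0" "a*r \<le> sc - \<delta>" "sc + \<delta> \<le> b*r"
    and rr: "sc\<^sup>2 + 2 * sc*\<delta> + \<rho>\<^sup>2 \<le> r\<^sup>2" and r: "r > 0"
  shows "unit_ball_vol (real d) * \<rho> ^ d \<le> measure (Rsp d) (Bset d X r a b) + 2 * (unit_ball_vol (real d) * (sqrt (\<rho>\<^sup>2-\<delta>\<^sup>2)) ^ d)"
proof -
  have \<rho>: "\<rho> > 0" using dl by simp
  have \<rho>': "sqrt (\<rho>\<^sup>2-\<delta>\<^sup>2) > 0" using dl by (simp add: power_strict_mono)
  let ?B0 = "{y \<in> space (Rsp d). nrmd d (\<lambda>i. y i - (X i + sc * (X i / nrmd d X))) \<le> \<rho>}"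
  let ?B1 = "{y \<in> space (Rsp d). nrmd d (\<lambda>i. y i - (X i + (sc-\<delta>) * (X i / nrmd d X))) \<le> sqrt (\<rho>\<^sup>2-\<delta>\<^sup>2)}"
  let ?B2 = "{y \<in> space (Rsp d). nrmd d (\<lambda>i. y i - (X i + (sc+\<delta>) * (X i / nrmd d X))) \<le> sqrt (\<rho>\<^sup>2-\<delta>\<^sup>2)}"
  have sub: "?B0 \<subseteq> Bset d X r a b \<union> ?B1 \<union> ?B2"
    using lower_incl[OF N dl(1) _ sc rr r] dl by auto
  have fB: "Bset d X r a b \<in> fmeasurable (Rsp d)"
  proof -
    have R: "r * sqrt (1 - 0\<^sup>2) > 0" using r by simp
    have "Bset d X r a b \<subseteq> {y \<in> space (Rsp d). nrmd d (\<lambda>i. y i - X i) \<le> r}" by (auto simp: Bset_def)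
    then show ?thesis using ball_fmeas[OF r, of d X] Bset_sets by (auto intro: fmeasurableI2)
  qed
  have "measure (Rsp d) ?B0 \<le> measure (Rsp d) (Bset d X r a b \<union> ?B1 \<union> ?B2)"
    by (rule measure_mono_fmeasurable[OF sub]) (auto intro!: fmeasurable.Un fB ball_fmeas \<rho>' simp: ball_sets)
  also have "\<dots> \<le> measure (Rsp d) (Bset d X r a b) + measure (Rsp d) ?B1 + measure (Rsp d) ?B2"
  proof -
    have s1: "?B1 \<in> sets (Rsp d)" "?B2 \<in> sets (Rsp d)" "Bset d X r a b \<in> sets (Rsp d)" by (auto simp: ball_sets Bset_sets)
    then have s2: "Bset d X r a b \<union> ?B1 \<in> sets (Rsp d)" by auto
    show ?thesis using measure_Un_le[OF s2 s1(2)] measure_Un_le[OF s1(3) s1(1)] by linarith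
  qed
  finally show ?thesis using ball_measure[OF \<rho>] ball_measure[OF \<rho>'] by simp
qed

lemma params:
  fixes a b r \<epsilon> :: real
  assumes a: "0 \<le> a" "a < b" "b \<le> 1" and r: "r > 0" and e: "\<epsilon> > 0"
  shows "\<exists>\<delta> \<rho>. \<delta> > 0 \<and> \<delta> < \<rho> \<and> ln \<rho> \<ge> ln (r * sqrt (1 - a\<^sup>2)) - \<epsilon>/2 \<and> 2*\<delta> \<le> (b-a)*r
      \<and> (a*r+\<delta>)\<^sup>2 + 2*(a*r+\<delta>)*\<delta> + \<rho>\<^sup>2 \<le> r\<^sup>2"
proof -
  define R where "R = r * sqrt (1 - a\<^sup>2)"
  have a1: "a < 1" using a by simp
  have h1: "1 - a\<^sup>2 > 0" using a a1 by (simp add: abs_square_less_1)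
  have R: "R > 0" unfolding R_def using r h1 by simp
  have R2: "R\<^sup>2 = r\<^sup>2 - a\<^sup>2 * r\<^sup>2" unfolding R_def using h1 by (simp add: power_mult_distrib algebra_simps)
  define \<theta> where "\<theta> = exp (-\<epsilon>)"
  have \<theta>: "0 < \<theta>" "\<theta> < 1" unfolding \<theta>_def using e by auto
  define K where "K = 4*a*r+3"
  have K: "K > 0" unfolding K_def using a r by (simp add: add_nonneg_pos)
  define \<delta> where "\<delta> = min (min 1 ((b-a)*r/2)) (min (R\<^sup>2*(1-\<theta>)/K) (R* sqrt \<theta>/2))"
  have d0: "\<delta> > 0" unfolding \<delta>_def using a r R \<theta> K by auto
  have d1: "\<delta> \<le> 1" "\<delta> \<le> (b-a)*r/2" "\<delta> \<le> R\<^sup>2*(1-\<theta>)/K" "\<delta> \<le> R* sqrt \<theta>/2" unfolding \<delta>_def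
    by (rule order_trans[OF min.cobounded1 min.cobounded1], rule order_trans[OF min.cobounded1 min.cobounded2],
        rule order_trans[OF min.cobounded2 min.cobounded1], rule order_trans[OF min.cobounded2 min.cobounded2])
  have "K * \<delta> \<le> R\<^sup>2*(1-\<theta>)" using d1(3) K by (simp add: pos_le_divide_eq mult.commute)
  moreover have "3*\<delta>\<^sup>2 \<le> 3*\<delta>" using d1(1) d0 by (simp add: power2_eq_square)
  ultimately have "4*a*r*\<delta> + 3*\<delta>\<^sup>2 \<le> R\<^sup>2*(1-\<theta>)" unfolding K_def by (simp add: algebra_simps)
  then have Q: "R\<^sup>2 - 4*a*r*\<delta> - 3*\<delta>\<^sup>2 \<ge> R\<^sup>2*\<theta>" by (simp add: algebra_simps)
  define \<rho> where "\<rho> = sqrt (R\<^sup>2 - 4*a*r*\<delta> - 3*\<delta>\<^sup>2)"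
  have Rt: "R\<^sup>2*\<theta> > 0" using R \<theta> by simp
  have \<rho>2: "\<rho>\<^sup>2 = R\<^sup>2 - 4*a*r*\<delta> - 3*\<delta>\<^sup>2" unfolding \<rho>_def using Q Rt by simp
  have \<rho>ge: "\<rho> \<ge> R * sqrt \<theta>"
  proof -
    have "sqrt (R\<^sup>2*\<theta>) \<le> \<rho>" unfolding \<rho>_def using Q by (rule real_sqrt_le_mono)
    then show ?thesis using R \<theta> by (simp add: real_sqrt_mult)
  qed
  have st: "R * sqrt \<theta> > 0" using R \<theta> by simp
  have dr: "\<delta> < \<rho>" using d1(4) \<rho>ge st by linarith
  have "ln \<rho> \<ge> ln (R * sqrt \<theta>)" using \<rho>ge st by simp
  also have "ln (R * sqrt \<theta>) = ln R - \<epsilon>/2" using R \<theta> by (simp add: ln_mult ln_sqrt \<theta>_def)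
  finally have l: "ln \<rho> \<ge> ln R - \<epsilon>/2" .
  have "(a*r+\<delta>)\<^sup>2 + 2*(a*r+\<delta>)*\<delta> + \<rho>\<^sup>2 = r\<^sup>2" unfolding \<rho>2 R2 by (simp add: power2_eq_square algebra_simps)
  then show ?thesis using d0 dr l d1(2) unfolding R_def by (intro exI[of _ \<delta>] exI[of _ \<rho>]) auto
qed

lemma nrmd_pos:
  assumes "\<exists>i<d. X i \<noteq> (0::real)" shows "nrmd d X > 0"
proof -
  from assms obtain i where i: "i < d" "X i \<noteq> 0" by auto
  have "0 < (X i)\<^sup>2" using i by simp
  also have "\<dots> \<le> (\<Sum>j<d. (X j)\<^sup>2)" using i by (intro member_le_sum) auto
  finally show ?thesis unfolding nrmd_def by simp
qed

theorem lemma2p4: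
  fixes x :: "nat \<Rightarrow> nat \<Rightarrow> real" and a b r :: real
  assumes "\<And>d. d \<ge> 1 \<Longrightarrow> \<exists>i<d. x d i \<noteq> 0"
    and "0 \<le> a" and "a < b" and "b \<le> 1" and "r > 0"
  shows "((\<lambda>d. ln (measure (Rsp d) (Bset d (x d) r a b) / vball d) / real d)
           \<longlongrightarrow> ln (r * sqrt (1 - a\<^sup>2))) sequentially"
proof -
  note xa = assms(1) and a = assms(2,3,4) and r = assms(5)
  define R where "R = r * sqrt (1 - a\<^sup>2)"
  define m where "m d = measure (Rsp d) (Bset d (x d) r a b)" for d
  define V where "V d = unit_ball_vol (real d)" for d
  define f where "f d = ln (m d / V d) / real d" for d
  have a1: "a < 1" using a by simp
  have h1: "1 - a\<^sup>2 > 0" using a a1 by (simp add: abs_square_less_1)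
  have R: "R > 0" unfolding R_def using r h1 by simp
  have V: "V d > 0" for d unfolding V_def by simp
  have N: "nrmd d (x d) > 0" if "d \<ge> 1" for d using nrmd_pos[OF xa[OF that]] .
  have low: "eventually (\<lambda>d. m d > 0 \<and> f d > ln R - \<epsilon>) sequentially" if e: "\<epsilon> > 0" for \<epsilon>
  proof -
    obtain \<delta> \<rho> where p: "\<delta> > 0" "\<delta> < \<rho>" "ln \<rho> \<ge> ln R - \<epsilon>/2" "2*\<delta> \<le> (b-a)*r"
      "(a*r+\<delta>)\<^sup>2 + 2*(a*r+\<delta>)*\<delta> + \<rho>\<^sup>2 \<le> r\<^sup>2"
      using params[OF a r e] unfolding R_def by blast
    define \<rho>' where "\<rho>' = sqrt (\<rho>\<^sup>2-\<delta>\<^sup>2)"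
    have \<rho>: "\<rho> > 0" using p by simp
    have \<rho>': "\<rho>' > 0" "\<rho>' < \<rho>" unfolding \<rho>'_def using p \<rho>
      by (auto simp: power_strict_mono real_sqrt_less_iff intro!: real_less_lsqrt)
    have bound: "V d * \<rho> ^ d \<le> m d + 2 * (V d * \<rho>' ^ d)" if "d \<ge> 1" for d
      unfolding V_def m_def \<rho>'_def
      by (rule m_lower[OF N[OF that] p(1,2), where sc="a*r+\<delta>" and a=a and r=r and b=b]) (use p a r in \<open>auto simp: algebra_simps\<close>)
    have "(\<lambda>d. (\<rho>'/\<rho>)^d) \<longlonglongrightarrow> 0" using \<rho> \<rho>' by (intro LIMSEQ_realpow_zero) auto
    then have ev1: "eventually (\<lambda>d. (\<rho>'/\<rho>)^d < 1/4) sequentially" by (rule order_tendstoD) simp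
    have "(\<lambda>d. ln 2 / real d) \<longlonglongrightarrow> 0" by (rule lim_const_over_n)
    then have ev2: "eventually (\<lambda>d. ln 2 / real d < \<epsilon>/2) sequentially" by (rule order_tendstoD) (use e in simp)
    have ev3: "eventually (\<lambda>d. d \<ge> 1) sequentially" by (rule eventually_ge_at_top)
    show ?thesis using ev1 ev2 ev3
    proof eventually_elim
      case (elim d)
      have pw: "\<rho>' ^ d < \<rho> ^ d / 4" using elim(1) \<rho> by (simp add: power_divide field_simps)
      have "V d * (\<rho> ^ d / 2) < m d"
        using bound[OF elim(3)] mult_strict_left_mono[OF pw V[of d]] by (simp add: field_simps)
      moreover have pos: "V d * (\<rho> ^ d / 2) > 0" using V[of d] \<rho> by simp
      ultimately have m0: "m d > 0" by linarith
      have "\<rho> ^ d / 2 < m d / V d" using \<open>V d * (\<rho> ^ d / 2) < m d\<close> V[of d] by (simp add: field_simps)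
      then have "ln (\<rho> ^ d / 2) < ln (m d / V d)" using \<rho> m0 V[of d] by (intro ln_less_cancel_iff[THEN iffD2]) auto
      then have "real d * ln \<rho> - ln 2 < ln (m d / V d)" using \<rho> by (simp add: ln_div ln_realpow)
      then have "(real d * ln \<rho> - ln 2) / real d < f d" unfolding f_def using elim(3)
        by (intro divide_strict_right_mono) auto
      moreover have "(real d * ln \<rho> - ln 2) / real d = ln \<rho> - ln 2 / real d" using elim(3) by (simp add: diff_divide_distrib)
      ultimately have "ln \<rho> - ln 2 / real d < f d" by simp
      then show ?case using m0 elim(2) p(3) by linarith
    qed
  qed
  have up: "eventually (\<lambda>d. m d > 0 \<longrightarrow> f d \<le> ln R) sequentially"
    using eventually_ge_at_top[of 1]
  proof eventually_elim
    case (elim d)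
    show ?case
    proof
      assume m0: "m d > 0"
      have "m d \<le> V d * R ^ d" unfolding m_def V_def R_def by (rule m_upper[OF N[OF elim] a(1) a1 r])
      then have "m d / V d \<le> R ^ d" using V[of d] by (simp add: field_simps)
      then have "ln (m d / V d) \<le> ln (R ^ d)" using m0 V[of d] R by (intro ln_le_cancel_iff[THEN iffD2]) auto
      then have "ln (m d / V d) \<le> real d * ln R" by (simp add: ln_realpow)
      then show "f d \<le> ln R" unfolding f_def using elim by (simp add: field_simps)
    qed
  qed
  have "(f \<longlongrightarrow> ln R) sequentially"
  proof (rule order_tendstoI)
    fix c assume "c < ln R"
    then have "eventually (\<lambda>d. m d > 0 \<and> f d > ln R - (ln R - c)) sequentially" by (intro low) simp
    then show "eventually (\<lambda>d. c < f d) sequentially" by eventually_elim simp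
  next
    fix c assume c: "ln R < c"
    show "eventually (\<lambda>d. f d < c) sequentially" using low[OF zero_less_one] up
      by eventually_elim (use c in auto)
  qed
  moreover have "vball d = V d" for d unfolding V_def by (rule vball_eq)
  ultimately show ?thesis unfolding f_def m_def R_def by simp
qed

end
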